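(* Let $q$ be an odd prime power and $m\geq 2$. For each $1\leq i\leq m$ there exists a coset leader $S_i$ modulo $q^m-1$ with $w_q(S_i)=(q-1)m-i$. Moreover, for $1\leq i\leq m-1$, if $M_i$ and $M_{i+1}$ denote the largest coset leaders modulo $q^m-1$ with $w_q(M_i)=(q-1)m-i$ and $w_q(M_{i+1})=(q-1)m-(i+1)$ respectively, then $M_i>M_{i+1}$.
   Context: For $0\leq s\leq q^m-2$ with $q$-adic expansion $s=\sum_{j=0}^{m-1}s_jq^j$ ($0\leq s_j\leq q-1$), the $q$-weight is $w_q(s)=\sum_{j=0}^{m-1}s_j$. The $q$-cyclotomic coset of $s$ modulo $q^m-1$ is $\{s,sq,sq^2,\ldots\}\bmod(q^m-1)$; its smallest element is its coset leader, and "coset leader modulo $q^m-1$" means an integer equal to the coset leader of its own coset. *)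

theory Defs
  imports "HOL-Number_Theory.Number_Theory"
begin

definition qweight :: "nat \<Rightarrow> nat \<Rightarrow> nat \<Rightarrow> nat" where
  "qweight q m s = (\<Sum>j<m. (s div q ^ j) mod q)"

definition cyc_coset :: "nat \<Rightarrow> nat \<Rightarrow> nat \<Rightarrow> nat set" where
  "cyc_coset q m s = {(s * q ^ j) mod (q ^ m - 1) | j. True}"

definition coset_leader :: "nat \<Rightarrow> nat \<Rightarrow> nat \<Rightarrow> bool" where
  "coset_leader q m s \<longleftrightarrow> s \<le> q ^ m - 2 \<and> s = Min (cyc_coset q m s)"

end

theory Submission
  imports Defs
begin

definition dig :: "nat \<Rightarrow> nat \<Rightarrow> nat \<Rightarrow> nat" where
  "dig q x j = x div q ^ j mod q"

lemma qweight_dig: "qweight q m s = (\<Sum>j<m. dig q s j)"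
  by (simp add: qweight_def dig_def)

lemma dig_Suc: "dig q x (Suc j) = dig q (x div q) j"
  by (simp add: dig_def div_mult2_eq)

lemma num_split:
  "(\<Sum>l<Suc m. e l * (q::nat) ^ l) = e 0 + q * (\<Sum>l<m. e (Suc l) * q ^ l)"
  unfolding sum.lessThan_Suc_shift by (simp add: sum_distrib_left mult_ac del: sum.lessThan_Suc)

lemma num_bound:
  assumes "\<forall>l<m. e l < (q::nat)"
  shows "(\<Sum>l<m. e l * q ^ l) < q ^ m"
  using assms
proof (induction m arbitrary: e)
  case 0 then show ?case by simp
next
  case (Suc m)
  have h: "(\<Sum>l<m. e (Suc l) * q ^ l) < q ^ m" using Suc by auto
  have e0: "e 0 < q" using Suc by auto
  have "e 0 + q * (\<Sum>l<m. e (Suc l) * q ^ l) \<le> (q - 1) + q * (q^m - 1)"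
    using h e0 by (intro add_mono mult_le_mono) auto
  also have "\<dots> < q ^ Suc m" using e0 h
    by (simp add: right_diff_distrib algebra_simps)
  finally show ?case by (simp only: num_split)
qed

lemma num_dig:
  assumes "\<forall>l<m. e l < (q::nat)" "k < m"
  shows "dig q (\<Sum>l<m. e l * q ^ l) k = e k"
  using assms
proof (induction m arbitrary: e k)
  case 0 then show ?case by simp
next
  case (Suc m)
  have q0: "q > 0" using Suc by auto
  have e0: "e 0 < q" using Suc by auto
  show ?case
  proof (cases k)
    case 0
    then show ?thesis using e0 unfolding num_split by (simp add: dig_def del: sum.lessThan_Suc)
  next
    case (Suc k')
    have "dig q (e 0 + q * (\<Sum>l<m. e (Suc l) * q ^ l)) k
        = dig q (\<Sum>l<m. e (Suc l) * q ^ l) k'"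
      using Suc e0 q0 by (simp add: dig_Suc)
    also have "\<dots> = e k" using Suc.IH[of "\<lambda>l. e (Suc l)" k'] Suc.prems Suc by auto
    finally show ?thesis by (simp only: num_split)
  qed
qed

lemma expand:
  assumes "x < (q::nat) ^ m" "q > 0"
  shows "x = (\<Sum>l<m. dig q x l * q ^ l)"
  using assms
proof (induction m arbitrary: x)
  case 0 then show ?case by simp
next
  case (Suc m)
  have "x div q < q ^ m" using Suc.prems
    by (simp add: div_less_iff_less_mult mult.commute)
  then have ih: "x div q = (\<Sum>l<m. dig q (x div q) l * q ^ l)" using Suc by auto
  have "(\<Sum>l<Suc m. dig q x l * q ^ l) = dig q x 0 + q * (\<Sum>l<m. dig q (x div q) l * q ^ l)"
    by (simp only: num_split dig_Suc)
  also have "\<dots> = x mod q + q * (x div q)" using ih by (simp add: dig_def)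
  finally show ?case by simp
qed

lemma geom:
  assumes "(q::nat) > 0"
  shows "(\<Sum>l<m. (q - 1) * q ^ l) = q ^ m - 1"
proof (induction m)
  case 0 then show ?case by simp
next
  case (Suc m)
  have "q ^ m \<ge> 1" using assms by simp
  then show ?case using Suc assms
    by (simp add: algebra_simps diff_mult_distrib)
qed


lemma rot1:
  fixes q m y :: nat
  assumes q: "q \<ge> 2" and m: "m \<ge> 1" and y: "y < q ^ m - 1"
  shows "y * q mod (q ^ m - 1) = (y mod q ^ (m - 1)) * q + y div q ^ (m - 1)"
    and "(y mod q ^ (m - 1)) * q + y div q ^ (m - 1) < q ^ m - 1"
proof -
  define a where "a = y div q ^ (m - 1)"
  define b where "b = y mod q ^ (m - 1)"
  have qm: "q ^ m = q * q ^ (m - 1)" using m by (metis Suc_diff_le diff_Suc_1 power_Suc)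
  have yab: "y = a * q ^ (m - 1) + b" unfolding a_def b_def by (rule div_mult_mod_eq[symmetric])
  have b: "b < q ^ (m - 1)" using q by (simp add: b_def)
  have a: "a < q" using y qm q by (simp add: a_def div_less_iff_less_mult)
  have yq: "y * q = a * (q ^ m - 1) + (b * q + a)"
  proof -
    have "q ^ m \<ge> 1" using q by simp
    then have "a * (q ^ m - 1) + a = a * q ^ m" by (simp add: diff_mult_distrib2)
    then show ?thesis using yab qm by (simp add: algebra_simps)
  qed
  have lt: "b * q + a < q ^ m - 1"
  proof (rule ccontr)
    assume "\<not> ?thesis"
    then have ge: "b * q + a \<ge> q ^ m - 1" by simp
    have b1: "b + 1 \<le> q ^ (m - 1)" using b by simp
    have "b * q + a \<le> (q ^ (m - 1) - 1) * q + (q - 1)" using b a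
      by (intro add_mono mult_le_mono) auto
    also have "\<dots> = q ^ m - 1" using qm q
      by (simp add: diff_mult_distrib algebra_simps)
    finally have eq: "b * q + a = q ^ m - 1" using ge by simp
    have "a = q - 1"
    proof (rule ccontr)
      assume "a \<noteq> q - 1"
      then have "a + 1 \<le> q - 1" using a by simp
      then have "b * q + (a + 1) \<le> (q ^ (m - 1) - 1) * q + (q - 1)" using b
        by (intro add_mono mult_le_mono) auto
      then show False using eq \<open>(q ^ (m - 1) - 1) * q + (q - 1) = q ^ m - 1\<close> by simp
    qed
    then have "b * q = q ^ m - q" using eq q by simp
    then have "b * q = (q ^ (m - 1) - 1) * q" using qm by (simp add: diff_mult_distrib diff_mult_distrib2 mult.commute)
    then have "b = q ^ (m - 1) - 1" using q by simp
    then have "y = q ^ m - 1" using yab \<open>a = q - 1\<close> qm q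
      by (simp add: diff_mult_distrib algebra_simps)
    then show False using y by simp
  qed
  have "y * q mod (q ^ m - 1) = b * q + a"
    using yq lt by (metis mod_mult_self3 mod_less)
  then show "y * q mod (q ^ m - 1) = (y mod q ^ (m - 1)) * q + y div q ^ (m - 1)"
    unfolding a_def b_def .
  show "(y mod q ^ (m - 1)) * q + y div q ^ (m - 1) < q ^ m - 1"
    using lt unfolding a_def b_def .
qed


lemma dig_mod:
  assumes "k < r" "(q::nat) > 0"
  shows "dig q (y mod q ^ r) k = dig q y k"
proof -
  have r: "q ^ r = q ^ k * q ^ (r - k)" using assms by (simp add: power_add[symmetric])
  have "(y mod q ^ r) div q ^ k = y div q ^ k mod q ^ (r - k)"
    unfolding r mod_mult2_eq using assms by simp
  moreover have "q dvd q ^ (r - k)" using assms by simp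
  ultimately show ?thesis unfolding dig_def by (simp add: mod_mod_cancel)
qed

lemma rot1_dig:
  fixes q m y :: nat
  assumes q: "q \<ge> 2" and m: "m \<ge> 1" and y: "y < q ^ m - 1" and k: "k < m"
  shows "dig q (y * q mod (q ^ m - 1)) ((k + 1) mod m) = dig q y k"
proof -
  define a where "a = y div q ^ (m - 1)"
  define b where "b = y mod q ^ (m - 1)"
  have qm: "q ^ m = q * q ^ (m - 1)" using m by (metis Suc_diff_le diff_Suc_1 power_Suc)
  have a: "a < q" using y qm q by (simp add: a_def div_less_iff_less_mult)
  have R: "y * q mod (q ^ m - 1) = b * q + a" unfolding a_def b_def using rot1(1)[OF q m y] .
  show ?thesis
  proof (cases "k + 1 < m")
    case True
    have "dig q (b * q + a) (Suc k) = dig q b k"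
      unfolding dig_Suc using a by simp
    also have "\<dots> = dig q y k" unfolding b_def using True q by (intro dig_mod) auto
    finally show ?thesis using R True by simp
  next
    case False
    then have km: "k = m - 1" using k by simp
    have "dig q (b * q + a) 0 = a" using a by (simp add: dig_def)
    also have "\<dots> = dig q y k" using a km by (simp add: dig_def a_def)
    finally show ?thesis using R False km k by simp
  qed
qed

lemma weight_rot1:
  fixes q m y :: nat
  assumes q: "q \<ge> 2" and m: "m \<ge> 1" and y: "y < q ^ m - 1"
  shows "qweight q m (y * q mod (q ^ m - 1)) = qweight q m y"
proof -
  obtain m' where m': "m = Suc m'" using m by (cases m) auto
  let ?z = "y * q mod (q ^ m - 1)"
  have "qweight q m ?z = dig q ?z 0 + (\<Sum>k<m'. dig q ?z (Suc k))"
    unfolding qweight_dig m' sum.lessThan_Suc_shift by simp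
  also have "dig q ?z 0 = dig q y m'"
    using rot1_dig[OF q m y, of m'] m' by simp
  also have "(\<Sum>k<m'. dig q ?z (Suc k)) = (\<Sum>k<m'. dig q y k)"
  proof (intro sum.cong refl)
    fix x assume x: "x \<in> {..<m'}"
    then have "(x + 1) mod m = Suc x" using m' by simp
    then show "dig q ?z (Suc x) = dig q y x" using rot1_dig[OF q m y, of x] x m' by simp
  qed
  finally show ?thesis unfolding qweight_dig m' by simp
qed

lemma rot_step:
  "(y::nat) * q ^ Suc t mod n = (y * q ^ t mod n) * q mod n"
  by (metis mod_mult_left_eq mult.assoc power_Suc2)

lemma rot_lt:
  fixes q m y :: nat
  assumes q: "q \<ge> 2" and m: "m \<ge> 1"
  shows "y * q ^ t mod (q ^ m - 1) < q ^ m - 1"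
proof -
  have "q ^ m \<ge> q" using q m by (simp add: self_le_power)
  then show ?thesis using q by simp
qed

lemma weight_rot:
  fixes q m y :: nat
  assumes q: "q \<ge> 2" and m: "m \<ge> 1" and y: "y < q ^ m - 1"
  shows "qweight q m (y * q ^ t mod (q ^ m - 1)) = qweight q m y"
proof (induction t)
  case 0 then show ?case using y by simp
next
  case (Suc t)
  show ?case unfolding rot_step
    using weight_rot1[OF q m rot_lt[OF q m]] Suc by simp
qed

lemma rot_dig:
  fixes q m y :: nat
  assumes q: "q \<ge> 2" and m: "m \<ge> 1" and y: "y < q ^ m - 1" and k: "k < m"
  shows "dig q (y * q ^ t mod (q ^ m - 1)) ((k + t) mod m) = dig q y k"
proof (induction t)
  case 0 then show ?case using y k by simp
next
  case (Suc t)
  have km: "(k + t) mod m < m" using m by simp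
  have e: "(k + Suc t) mod m = ((k + t) mod m + 1) mod m" by (simp add: mod_Suc_eq)
  show ?case unfolding rot_step e
    using rot1_dig[OF q m rot_lt[OF q m] km] Suc by simp
qed


lemma dig_lt: "(q::nat) > 0 \<Longrightarrow> dig q x l < q"
  by (simp add: dig_def)

lemma inc:
  fixes q m x j :: nat
  assumes q: "q \<ge> 2" and x: "x < q ^ m" and j: "j < m" and dj: "dig q x j < q - 1"
    and w: "qweight q m x + 1 < (q - 1) * m"
  shows "x + q ^ j < q ^ m - 1" and "qweight q m (x + q ^ j) = qweight q m x + 1"
proof -
  define e where "e l = dig q x l + (if l = j then 1 else 0)" for l
  have he: "\<forall>l<m. e l < q" using dj dig_lt[of q x] q by (auto simp: e_def)
  have "x + q ^ j = (\<Sum>l<m. dig q x l * q ^ l) + (\<Sum>l<m. (if l = j then 1 else 0) * q ^ l)"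
  proof -
    have "(\<Sum>l<m. (if l = j then 1 else 0) * q ^ l) = (\<Sum>l<m. if l = j then q ^ j else 0)"
      by (intro sum.cong) auto
    also have "\<dots> = q ^ j" using j by (simp add: sum.delta)
    finally show ?thesis using expand[OF x] q by simp
  qed
  also have "\<dots> = (\<Sum>l<m. e l * q ^ l)"
    by (simp add: e_def sum.distrib[symmetric] distrib_right)
  finally have xe: "x + q ^ j = (\<Sum>l<m. e l * q ^ l)" .
  have se: "(\<Sum>l<m. e l) = qweight q m x + 1"
    using j by (simp add: e_def sum.distrib qweight_dig)
  show "qweight q m (x + q ^ j) = qweight q m x + 1"
  proof -
    have "qweight q m (x + q ^ j) = (\<Sum>l<m. e l)"
      unfolding qweight_dig xe using num_dig[OF he] by simp
    then show ?thesis using se by simp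
  qed
  have ex: "\<exists>l\<in>{..<m}. e l < q - 1"
  proof (rule ccontr)
    assume "\<not> ?thesis"
    then have "\<forall>l\<in>{..<m}. q - 1 \<le> e l" using not_less by blast
    then have "(\<Sum>l<m. q - 1) \<le> (\<Sum>l<m. e l)" by (intro sum_mono) auto
    then show False using se w by (simp add: mult.commute)
  qed
  have "(\<Sum>l<m. e l * q ^ l) < (\<Sum>l<m. (q - 1) * q ^ l)"
  proof (rule sum_strict_mono_ex1)
    show "\<forall>l\<in>{..<m}. e l * q ^ l \<le> (q - 1) * q ^ l" using he by auto
    show "\<exists>l\<in>{..<m}. e l * q ^ l < (q - 1) * q ^ l" using ex q by auto
  qed simp
  then show "x + q ^ j < q ^ m - 1" using xe geom[of q m] q by simp
qed

lemma coset_finite: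
  assumes "(q::nat) \<ge> 2" "m \<ge> 1"
  shows "finite (cyc_coset q m x)" "cyc_coset q m x \<subseteq> {..<q ^ m - 1}"
proof -
  show "cyc_coset q m x \<subseteq> {..<q ^ m - 1}"
    unfolding cyc_coset_def using rot_lt[OF assms] by auto
  then show "finite (cyc_coset q m x)" using finite_subset by blast
qed

lemma leader_le:
  assumes q: "(q::nat) \<ge> 2" and m: "m \<ge> 1" and L: "coset_leader q m s"
  shows "s < q ^ m - 1" "s \<le> s * q ^ t mod (q ^ m - 1)"
proof -
  have "q ^ m \<ge> q" using q m by (simp add: self_le_power)
  then show "s < q ^ m - 1" using L q unfolding coset_leader_def by arith
  have "s * q ^ t mod (q ^ m - 1) \<in> cyc_coset q m s" unfolding cyc_coset_def by auto
  then show "s \<le> s * q ^ t mod (q ^ m - 1)"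
    using L coset_finite[OF q m] unfolding coset_leader_def by (metis Min_le)
qed

lemma min_leader:
  assumes q: "(q::nat) \<ge> 2" and m: "m \<ge> 1" and x: "x < q ^ m - 1"
  shows "coset_leader q m (Min (cyc_coset q m x))"
    "qweight q m (Min (cyc_coset q m x)) = qweight q m x"
    "\<exists>t. Min (cyc_coset q m x) = x * q ^ t mod (q ^ m - 1)"
proof -
  let ?n = "q ^ m - 1"
  let ?L = "Min (cyc_coset q m x)"
  have ne: "cyc_coset q m x \<noteq> {}" unfolding cyc_coset_def by auto
  have "?L \<in> cyc_coset q m x" using Min_in[OF coset_finite(1)[OF q m] ne] .
  then show ex: "\<exists>t. ?L = x * q ^ t mod ?n" unfolding cyc_coset_def by auto
  then obtain t where t: "?L = x * q ^ t mod ?n" by blast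
  show "qweight q m ?L = qweight q m x" using t weight_rot[OF q m x] by simp
  have Ln: "?L < ?n" using t rot_lt[OF q m] by simp
  have sub: "cyc_coset q m ?L \<subseteq> cyc_coset q m x"
  proof
    fix z assume "z \<in> cyc_coset q m ?L"
    then obtain j where "z = ?L * q ^ j mod ?n" unfolding cyc_coset_def by auto
    then have "z = x * q ^ (t + j) mod ?n" using t
      by (simp add: mod_mult_left_eq power_add mult.assoc)
    then show "z \<in> cyc_coset q m x" unfolding cyc_coset_def by blast
  qed
  have "?L = ?L * q ^ 0 mod ?n" using Ln by simp
  then have inL: "?L \<in> cyc_coset q m ?L" unfolding cyc_coset_def by blast
  have ne2: "cyc_coset q m ?L \<noteq> {}" using inL by auto
  have "Min (cyc_coset q m ?L) \<le> ?L" using Min_le[OF coset_finite(1)[OF q m] inL] .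
  moreover have "Min (cyc_coset q m ?L) \<in> cyc_coset q m x"
    using Min_in[OF coset_finite(1)[OF q m] ne2] sub by blast
  then have "?L \<le> Min (cyc_coset q m ?L)" using Min_le[OF coset_finite(1)[OF q m]] by blast
  ultimately have "?L = Min (cyc_coset q m ?L)" by simp
  then show "coset_leader q m ?L" unfolding coset_leader_def using Ln by simp
qed


lemma exist_part:
  fixes q m i :: nat
  assumes q: "q \<ge> 2" and m: "m \<ge> 1" and i: "1 \<le> i" "i \<le> m"
  shows "\<exists>S. coset_leader q m S \<and> qweight q m S = (q - 1) * m - i"
proof -
  define e where "e l = (if l < i then q - 2 else q - 1)" for l
  define x where "x = (\<Sum>l<m. e l * q ^ l)"
  have he: "\<forall>l<m. e l < q" using q by (auto simp: e_def)
  have "(\<Sum>l<m. e l * q ^ l) < (\<Sum>l<m. (q - 1) * q ^ l)"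
  proof (rule sum_strict_mono_ex1)
    show "\<forall>l\<in>{..<m}. e l * q ^ l \<le> (q - 1) * q ^ l" by (auto simp: e_def)
    show "\<exists>l\<in>{..<m}. e l * q ^ l < (q - 1) * q ^ l"
      using i m q by (intro bexI[of _ 0]) (auto simp: e_def)
  qed simp
  then have xn: "x < q ^ m - 1" using geom[of q m] q by (simp add: x_def)
  have c: "(\<Sum>l<m. (if l < i then 1 else 0::nat)) = i"
  proof -
    have "(\<Sum>l<m. (if l < i then 1 else 0::nat)) = card ({..<m} \<inter> {l. l < i})"
      by (simp add: sum.If_cases)
    also have "{..<m} \<inter> {l. l < i} = {..<i}" using i by auto
    finally show ?thesis by simp
  qed
  have "(\<Sum>l<m. q - 1) = (\<Sum>l<m. e l + (if l < i then 1 else 0))"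
    using q by (intro sum.cong) (auto simp: e_def)
  also have "\<dots> = (\<Sum>l<m. e l) + i" using c by (simp add: sum.distrib)
  finally have se: "(\<Sum>l<m. e l) = (q - 1) * m - i" by (simp add: mult.commute)
  have wx: "qweight q m x = (q - 1) * m - i"
    unfolding qweight_dig x_def using num_dig[OF he] se by simp
  show ?thesis using min_leader[OF q m xn] wx by metis
qed

lemma q_pow_mod:
  fixes q m k :: nat
  assumes q3: "q \<ge> 3" and m: "m \<ge> 1"
  shows "q ^ k mod (q ^ m - 1) = q ^ (k mod m)"
proof -
  have q: "q \<ge> 2" using q3 by simp
  let ?n = "q ^ m - 1"
  have qm: "q ^ m \<ge> q" using q m by (simp add: self_le_power)
  have n2: "?n \<ge> 1" using q qm by simp
  have k: "q ^ k = (q ^ m) ^ (k div m) * q ^ (k mod m)"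
    by (simp add: power_mult[symmetric] power_add[symmetric])
  have "q ^ m mod ?n = 1 mod ?n"
  proof -
    have "q ^ m = 1 * ?n + 1" using qm q by simp
    then show ?thesis by (metis mod_mult_self3 add.commute)
  qed
  then have "(q ^ m) ^ (k div m) mod ?n = 1 mod ?n" by (metis power_mod power_one)
  then have "q ^ k mod ?n = q ^ (k mod m) mod ?n" unfolding k
    by (metis mod_mult_left_eq mult_1)
  also have "q ^ (k mod m) < ?n"
  proof -
    have "k mod m < m" using m by simp
    then have "q ^ (k mod m) \<le> q ^ (m - 1)" using q by (intro power_increasing) auto
    moreover have "q ^ m = q * q ^ (m - 1)" using m by (metis Suc_diff_le diff_Suc_1 power_Suc)
    moreover have "q ^ (m - 1) \<ge> 1" using q by simp
    moreover have "q * q ^ (m - 1) \<ge> 3 * q ^ (m - 1)" using q3 by (intro mult_le_mono1)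
    ultimately show ?thesis by linarith
  qed
  then have "q ^ (k mod m) mod ?n = q ^ (k mod m)" by simp
  finally show ?thesis .
qed


lemma step_part:
  fixes q m i s :: nat
  assumes q3: "q \<ge> 3" and m: "m \<ge> 1" and i: "1 \<le> i" "i + 1 \<le> m"
    and L: "coset_leader q m s" and ws: "qweight q m s = (q - 1) * m - (i + 1)"
  shows "\<exists>L. coset_leader q m L \<and> qweight q m L = (q - 1) * m - i \<and> s < L"
proof -
  have q: "q \<ge> 2" using q3 by simp
  let ?n = "q ^ m - 1"
  have sn: "s < ?n" using leader_le(1)[OF q m L] .
  have "1 \<le> q - 1" using q by arith
  then have mW: "m \<le> (q - 1) * m" using mult_le_mono1[of 1 "q - 1" m] by simp
  have w1: "qweight q m s + 1 < (q - 1) * m" using ws i mW by linarith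
  have "\<exists>j<m. dig q s j < q - 1"
  proof (rule ccontr)
    assume "\<not> ?thesis"
    then have "\<forall>l\<in>{..<m}. q - 1 \<le> dig q s l" using not_less by blast
    then have "(\<Sum>l<m. q - 1) \<le> (\<Sum>l<m. dig q s l)" by (intro sum_mono) auto
    then show False using w1 by (simp add: qweight_dig mult.commute)
  qed
  then obtain j where j: "j < m" "dig q s j < q - 1" by blast
  have sq: "s < q ^ m" using sn by simp
  have s'n: "s + q ^ j < ?n" and ws': "qweight q m (s + q ^ j) = qweight q m s + 1"
    using inc[OF q sq j w1] by auto
  obtain t where t: "Min (cyc_coset q m (s + q ^ j)) = (s + q ^ j) * q ^ t mod ?n"
    using min_leader(3)[OF q m s'n] by blast
  define A where "A = s * q ^ t mod ?n"
  define k where "k = (j + t) mod m"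
  have An: "A < ?n" unfolding A_def using rot_lt[OF q m] .
  have Aq: "A < q ^ m" using An by simp
  have dA: "dig q A k < q - 1" unfolding A_def k_def using rot_dig[OF q m sn j(1)] j by simp
  have wA: "qweight q m A + 1 < (q - 1) * m" unfolding A_def using weight_rot[OF q m sn] w1 by simp
  have km: "k < m" unfolding k_def using m by simp
  have Ak: "A + q ^ k < ?n" using inc(1)[OF q Aq km dA wA] .
  have "(s + q ^ j) * q ^ t mod ?n = (A + q ^ (j + t) mod ?n) mod ?n"
    unfolding A_def by (simp add: algebra_simps power_add mod_add_eq)
  also have "q ^ (j + t) mod ?n = q ^ k" unfolding k_def using q_pow_mod[OF q3 m] .
  also have "(A + q ^ k) mod ?n = A + q ^ k" using Ak by simp
  finally have Leq: "Min (cyc_coset q m (s + q ^ j)) = A + q ^ k" using t by simp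
  have "s \<le> A" unfolding A_def using leader_le(2)[OF q m L] .
  moreover have "q ^ k > 0" using q by simp
  ultimately have "s < Min (cyc_coset q m (s + q ^ j))" unfolding Leq by linarith
  moreover have "qweight q m (Min (cyc_coset q m (s + q ^ j))) = (q - 1) * m - i"
    using min_leader(2)[OF q m s'n] ws' ws i mW by linarith
  ultimately show ?thesis using min_leader(1)[OF q m s'n] by blast
qed

theorem lemma17:
  fixes q m :: nat
  assumes "primepow q" and "odd q" and "m \<ge> 2"
  shows "(\<forall>i\<in>{1..m}. \<exists>S. coset_leader q m S \<and> qweight q m S = (q - 1) * m - i)
       \<and> (\<forall>i\<in>{1..m-1}.
            Max {s. coset_leader q m s \<and> qweight q m s = (q - 1) * m - i}
          > Max {s. coset_leader q m s \<and> qweight q m s = (q - 1) * m - (i + 1)})"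
proof -
  have q1: "q > 1" using primepow_gt_Suc_0[OF assms(1)] by simp
  have q3: "q \<ge> 3"
  proof (rule ccontr)
    assume "\<not> ?thesis"
    then have "q = 2" using q1 by simp
    then show False using assms(2) by simp
  qed
  have q: "q \<ge> 2" using q3 by simp
  have m: "m \<ge> 1" using assms(3) by simp
  have P1: "\<forall>i\<in>{1..m}. \<exists>S. coset_leader q m S \<and> qweight q m S = (q - 1) * m - i"
    using exist_part[OF q m] by auto
  have fin: "finite {s. coset_leader q m s \<and> qweight q m s = w}" for w
  proof -
    have "{s. coset_leader q m s \<and> qweight q m s = w} \<subseteq> {..q ^ m - 2}"
      unfolding coset_leader_def by auto
    then show ?thesis using finite_subset by blast
  qed
  have P2: "Max {s. coset_leader q m s \<and> qweight q m s = (q - 1) * m - i}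
          > Max {s. coset_leader q m s \<and> qweight q m s = (q - 1) * m - (i + 1)}"
    if i: "i \<in> {1..m-1}" for i
  proof -
    let ?A = "{s. coset_leader q m s \<and> qweight q m s = (q - 1) * m - i}"
    let ?B = "{s. coset_leader q m s \<and> qweight q m s = (q - 1) * m - (i + 1)}"
    have i1: "1 \<le> i" "i + 1 \<le> m" using i m by auto
    have "?B \<noteq> {}" using P1 i1 by auto
    then have "Max ?B \<in> ?B" using Max_in[OF fin] by blast
    then obtain L where "coset_leader q m L" "qweight q m L = (q - 1) * m - i" "Max ?B < L"
      using step_part[OF q3 m i1] by blast
    then have "L \<in> ?A" "Max ?B < L" by auto
    then show ?thesis using Max_ge[OF fin] by (meson less_le_trans)
  qed
  show ?thesis using P1 P2 by blast
qed

end
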